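(* Let $x,y\in\mathbb{R}^d$ with $\lVert x\rVert=\lVert y\rVert=1$, and let $\epsilon\in\mathbb{R}$ with $\lVert x-y\rVert\le\epsilon$. Then for every $c\in\{0,\dots,k-1\}$, $$\lvert P(\hat c_y=c)-P(\hat c_x=c)\rvert\le d\,(\epsilon^2+2\epsilon).$$
   Context: Setting. We use the following notation. - $D\ge 0$ and $K\ge 0$ are integers. Put $d=2^D$, $k'=2^K$ and $n=2^{D+K}$. The number of classes $k$ satisfies $1\le k\le k'$. - $U\in\mathbb{C}^{n\times n}$ is a fixed unitary matrix, and $\lVert\cdot\rVert$ is the Euclidean norm. - All indices start at $0$. - For a unit vector $x\in\mathbb{R}^d$, let $v=U(x\otimes e_0)$, where $e_0\in\mathbb{C}^{k'}$ is the first standard basis vector. Thus $(x\otimes e_0)_{k's}=x_s$ and all other entries of $x\otimes e_0$ are $0$. - For $c\in\{0,\dots,k-1\}$, define $P(\hat c_x=c)=\sum_{t=0}^{d-1}\lvert v_{k't+c}\rvert^2$, and likewise for $y$. *)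

theory Defs
  imports "HOL-Analysis.Analysis"
begin

text \<open>Matrices of size m x m are represented as functions nat => nat => complex,
  only the entries with indices below m being relevant; vectors as functions on nat.
  All indices start at 0.\<close>

definition unitary_mat :: "nat \<Rightarrow> (nat \<Rightarrow> nat \<Rightarrow> complex) \<Rightarrow> bool" where
  "unitary_mat m U \<longleftrightarrow>
     (\<forall>i<m. \<forall>j<m. (\<Sum>l<m. cnj (U l i) * U l j) = (if i = j then 1 else 0)) \<and>
     (\<forall>i<m. \<forall>j<m. (\<Sum>l<m. U i l * cnj (U j l)) = (if i = j then 1 else 0))"

definition vnorm :: "nat \<Rightarrow> (nat \<Rightarrow> real) \<Rightarrow> real" where
  "vnorm m x = sqrt (\<Sum>s<m. (x s)\<^sup>2)"

text \<open>Tensor product x \<otimes> e_0 in C^(d k'): entry k' s equals x s, all others 0.\<close>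
definition tensor_e0 :: "nat \<Rightarrow> nat \<Rightarrow> (nat \<Rightarrow> real) \<Rightarrow> nat \<Rightarrow> complex" where
  "tensor_e0 d k' x j = (if j mod k' = 0 \<and> j div k' < d then complex_of_real (x (j div k')) else 0)"

definition mat_vec :: "nat \<Rightarrow> (nat \<Rightarrow> nat \<Rightarrow> complex) \<Rightarrow> (nat \<Rightarrow> complex) \<Rightarrow> nat \<Rightarrow> complex" where
  "mat_vec m U w i = (\<Sum>j<m. U i j * w j)"

definition class_prob :: "nat \<Rightarrow> nat \<Rightarrow> (nat \<Rightarrow> nat \<Rightarrow> complex) \<Rightarrow> (nat \<Rightarrow> real) \<Rightarrow> nat \<Rightarrow> real" where
  "class_prob D K U x c =
     (let d = 2 ^ D; k' = 2 ^ K; n = 2 ^ (D + K);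
          v = mat_vec n U (tensor_e0 d k' x)
      in \<Sum>t<d. (cmod (v (k' * t + c)))\<^sup>2)"

end

theory Submission
  imports Defs
begin

lemma swap3:
  "(\<Sum>i<m. \<Sum>j<m. \<Sum>l<m. f i j l) = (\<Sum>j<m. \<Sum>l<m. \<Sum>i<m. (f i j l :: complex))"
proof -
  have "(\<Sum>i<m. \<Sum>j<m. \<Sum>l<m. f i j l) = (\<Sum>j<m. \<Sum>i<m. \<Sum>l<m. f i j l)" by (rule sum.swap)
  also have "\<dots> = (\<Sum>j<m. \<Sum>l<m. \<Sum>i<m. f i j l)" by (intro sum.cong refl sum.swap)
  finally show ?thesis .
qed

lemma norm_pres:
  assumes "unitary_mat m U"
  shows "(\<Sum>i<m. (cmod (mat_vec m U w i))\<^sup>2) = (\<Sum>j<m. (cmod (w j))\<^sup>2)"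
proof -
  have orth: "\<And>j l. j < m \<Longrightarrow> l < m \<Longrightarrow> (\<Sum>i<m. U i j * cnj (U i l)) = (if l = j then 1 else 0)"
  proof -
    fix j l assume "j < m" "l < m"
    then have "(\<Sum>i<m. cnj (U i l) * U i j) = (if l = j then 1 else 0)"
      using assms unfolding unitary_mat_def by blast
    then show "(\<Sum>i<m. U i j * cnj (U i l)) = (if l = j then 1 else 0)"
      by (simp add: mult.commute)
  qed
  have "complex_of_real (\<Sum>i<m. (cmod (mat_vec m U w i))\<^sup>2)
      = (\<Sum>i<m. mat_vec m U w i * cnj (mat_vec m U w i))"
    unfolding of_real_sum by (intro sum.cong refl complex_norm_square)
  also have "\<dots> = (\<Sum>i<m. \<Sum>j<m. \<Sum>l<m. (w j * cnj (w l)) * (U i j * cnj (U i l)))"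
  proof -
    have "\<And>i. (\<Sum>j<m. U i j * w j) * (\<Sum>l<m. cnj (U i l) * cnj (w l)) = (\<Sum>j<m. \<Sum>l<m. w j * cnj (w l) * (U i j * cnj (U i l)))"
      by (subst sum_product) (intro sum.cong refl, simp only: mult_ac)
    then show ?thesis unfolding mat_vec_def cnj_sum complex_cnj_mult by simp
  qed
  also have "\<dots> = (\<Sum>j<m. \<Sum>l<m. (w j * cnj (w l)) * (\<Sum>i<m. U i j * cnj (U i l)))"
    unfolding sum_distrib_left by (rule swap3)
  also have "\<dots> = (\<Sum>j<m. \<Sum>l<m. (w j * cnj (w l)) * (if l = j then 1 else 0))"
    by (intro sum.cong refl) (simp add: orth)
  also have "\<dots> = (\<Sum>j<m. w j * cnj (w j))"
    by (simp add: if_distrib cong: if_cong)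
  also have "\<dots> = complex_of_real (\<Sum>j<m. (cmod (w j))\<^sup>2)"
    unfolding of_real_sum by (intro sum.cong refl complex_norm_square[symmetric])
  finally show ?thesis using of_real_eq_iff by blast
qed

lemma comp_bound:
  assumes "unitary_mat m U" "i < m"
  shows "(cmod (mat_vec m U w i))\<^sup>2 \<le> (\<Sum>j<m. (cmod (w j))\<^sup>2)"
proof -
  have "(cmod (mat_vec m U w i))\<^sup>2 \<le> (\<Sum>i<m. (cmod (mat_vec m U w i))\<^sup>2)"
    using assms(2) by (intro member_le_sum) auto
  then show ?thesis using norm_pres[OF assms(1)] by simp
qed

lemma mat_vec_diff:
  "mat_vec m U w' i - mat_vec m U w i = mat_vec m U (\<lambda>j. w' j - w j) i"
  unfolding mat_vec_def by (simp add: sum_subtractf algebra_simps)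

lemma tensor_diff:
  "(\<lambda>j. tensor_e0 d k' y j - tensor_e0 d k' x j) = tensor_e0 d k' (\<lambda>s. y s - x s)"
  unfolding tensor_e0_def by auto

lemma tensor_norm:
  assumes "0 < k'"
  shows "(\<Sum>j<d*k'. (cmod (tensor_e0 d k' x j))\<^sup>2) = (\<Sum>s<d. (x s)\<^sup>2)"
proof -
  have sub: "(\<lambda>s. k' * s) ` {..<d} \<subseteq> {..<d*k'}"
  proof
    fix j assume "j \<in> (\<lambda>s. k' * s) ` {..<d}"
    then obtain s where "s < d" "j = k' * s" by auto
    then have "k' * s < k' * d" using assms by simp
    then show "j \<in> {..<d*k'}" using \<open>j = k' * s\<close> by (simp add: mult.commute)
  qed
  have "(\<Sum>j<d*k'. (cmod (tensor_e0 d k' x j))\<^sup>2) = (\<Sum>j\<in>(\<lambda>s. k' * s) ` {..<d}. (cmod (tensor_e0 d k' x j))\<^sup>2)"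
  proof (rule sum.mono_neutral_right[OF _ sub])
    show "finite {..<d*k'}" by simp
    show "\<forall>i\<in>{..<d * k'} - (\<lambda>s. k' * s) ` {..<d}. (cmod (tensor_e0 d k' x i))\<^sup>2 = 0"
    proof
      fix i assume "i \<in> {..<d * k'} - (\<lambda>s. k' * s) ` {..<d}"
      then have "\<not> (i mod k' = 0 \<and> i div k' < d)"
        by (auto simp: mult.commute elim!: dvdE simp: mod_eq_0_iff_dvd)
      then show "(cmod (tensor_e0 d k' x i))\<^sup>2 = 0" unfolding tensor_e0_def by auto
    qed
  qed
  also have "\<dots> = (\<Sum>s<d. (cmod (tensor_e0 d k' x (k' * s)))\<^sup>2)"
    using assms by (subst sum.reindex) (auto simp: inj_on_def)
  also have "\<dots> = (\<Sum>s<d. (x s)\<^sup>2)"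
    using assms by (intro sum.cong refl) (simp add: tensor_e0_def)
  finally show ?thesis .
qed

lemma sq_diff_bound:
  fixes p q e :: real
  assumes "0 \<le> p" "p \<le> 1" "0 \<le> q" "\<bar>q - p\<bar> \<le> e"
  shows "\<bar>q\<^sup>2 - p\<^sup>2\<bar> \<le> e\<^sup>2 + 2 * e"
proof -
  have "\<bar>q\<^sup>2 - p\<^sup>2\<bar> = \<bar>q - p\<bar> * (q + p)"
  proof -
    have "q\<^sup>2 - p\<^sup>2 = (q - p) * (q + p)" by (simp add: power2_eq_square algebra_simps)
    then show ?thesis using assms by (simp add: abs_mult)
  qed
  also have "\<dots> \<le> e * (q + p)" using assms by (intro mult_right_mono) auto
  also have "\<dots> \<le> e * (2 + e)"
    using assms by (intro mult_left_mono) auto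
  finally show ?thesis by (simp add: power2_eq_square algebra_simps)
qed

theorem lemma2:
  fixes D K k c :: nat and U :: "nat \<Rightarrow> nat \<Rightarrow> complex"
    and x y :: "nat \<Rightarrow> real" and \<epsilon> :: real
  assumes "1 \<le> k" and "k \<le> 2 ^ K"
    and "unitary_mat (2 ^ (D + K)) U"
    and "vnorm (2 ^ D) x = 1" and "vnorm (2 ^ D) y = 1"
    and "vnorm (2 ^ D) (\<lambda>s. x s - y s) \<le> \<epsilon>"
    and "c < k"
  shows "\<bar>class_prob D K U y c - class_prob D K U x c\<bar> \<le> real (2 ^ D) * (\<epsilon>\<^sup>2 + 2 * \<epsilon>)"
proof -
  define d :: nat where "d = 2 ^ D"
  define k' :: nat where "k' = 2 ^ K"
  define n :: nat where "n = 2 ^ (D + K)"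
  have n: "n = d * k'" unfolding n_def d_def k'_def by (simp add: power_add)
  have k'pos: "0 < k'" unfolding k'_def by simp
  have ck: "c < k'" using assms(2,7) unfolding k'_def by simp
  define v where "v = mat_vec n U (tensor_e0 d k' x)"
  define v' where "v' = mat_vec n U (tensor_e0 d k' y)"
  have U: "unitary_mat n U" using assms(3) n_def by simp
  have sx: "(\<Sum>s<d. (x s)\<^sup>2) = 1"
    using assms(4) unfolding vnorm_def d_def by simp
  have "0 \<le> vnorm (2 ^ D) (\<lambda>s. x s - y s)" unfolding vnorm_def by (simp add: sum_nonneg)
  then have e0: "0 \<le> \<epsilon>" using assms(6) by linarith
  have sxy: "(\<Sum>s<d. (y s - x s)\<^sup>2) \<le> \<epsilon>\<^sup>2"
  proof -
    have "sqrt (\<Sum>s<d. (x s - y s)\<^sup>2) \<le> \<epsilon>" using assms(6) unfolding vnorm_def d_def .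
    then have "(sqrt (\<Sum>s<d. (x s - y s)\<^sup>2))\<^sup>2 \<le> \<epsilon>\<^sup>2"
      by (intro power_mono) (auto simp: sum_nonneg)
    then have "(\<Sum>s<d. (x s - y s)\<^sup>2) \<le> \<epsilon>\<^sup>2"
      by (simp add: sum_nonneg)
    then show ?thesis by (simp add: power2_commute)
  qed
  have idx: "k' * t + c < n" if "t < d" for t
  proof -
    have "k' * t + c < k' * t + k'" using ck by simp
    also have "\<dots> = k' * (t + 1)" by simp
    also have "\<dots> \<le> k' * d" using that by (intro mult_left_mono) auto
    finally show ?thesis using n by (simp add: mult.commute)
  qed
  have trm: "\<bar>(cmod (v' (k' * t + c)))\<^sup>2 - (cmod (v (k' * t + c)))\<^sup>2\<bar> \<le> \<epsilon>\<^sup>2 + 2 * \<epsilon>"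
    if "t < d" for t
  proof -
    let ?i = "k' * t + c"
    have "(cmod (v ?i))\<^sup>2 \<le> (\<Sum>j<n. (cmod (tensor_e0 d k' x j))\<^sup>2)"
      unfolding v_def by (rule comp_bound[OF U idx[OF that]])
    also have "\<dots> = (\<Sum>s<d. (x s)\<^sup>2)"
      unfolding n by (rule tensor_norm[OF k'pos])
    finally have "(cmod (v ?i))\<^sup>2 \<le> 1" using sx by simp
    then have "(cmod (v ?i))\<^sup>2 \<le> 1\<^sup>2" by (simp only: power_one)
    then have p1: "cmod (v ?i) \<le> 1" by (rule power2_le_imp_le) simp
    have dv: "v' ?i - v ?i = mat_vec n U (tensor_e0 d k' (\<lambda>s. y s - x s)) ?i"
      unfolding v_def v'_def mat_vec_diff tensor_diff ..
    have "(cmod (v' ?i - v ?i))\<^sup>2 \<le> (\<Sum>j<n. (cmod (tensor_e0 d k' (\<lambda>s. y s - x s) j))\<^sup>2)"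
      unfolding dv by (rule comp_bound[OF U idx[OF that]])
    also have "\<dots> = (\<Sum>s<d. (y s - x s)\<^sup>2)"
      unfolding n by (rule tensor_norm[OF k'pos])
    also have "\<dots> \<le> \<epsilon>\<^sup>2" by (rule sxy)
    finally have "(cmod (v' ?i - v ?i))\<^sup>2 \<le> \<epsilon>\<^sup>2" .
    then have "cmod (v' ?i - v ?i) \<le> \<epsilon>" using e0 by (rule power2_le_imp_le)
    moreover have "\<bar>cmod (v' ?i) - cmod (v ?i)\<bar> \<le> cmod (v' ?i - v ?i)" by (rule norm_triangle_ineq3)
    ultimately have "\<bar>cmod (v' ?i) - cmod (v ?i)\<bar> \<le> \<epsilon>" by linarith
    then show ?thesis by (rule sq_diff_bound[OF norm_ge_zero p1 norm_ge_zero])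
  qed
  have "\<bar>class_prob D K U y c - class_prob D K U x c\<bar>
      = \<bar>\<Sum>t<d. ((cmod (v' (k' * t + c)))\<^sup>2 - (cmod (v (k' * t + c)))\<^sup>2)\<bar>"
    unfolding class_prob_def Let_def v_def v'_def d_def k'_def n_def by (simp add: sum_subtractf)
  also have "\<dots> \<le> (\<Sum>t<d. \<bar>(cmod (v' (k' * t + c)))\<^sup>2 - (cmod (v (k' * t + c)))\<^sup>2\<bar>)"
    by (rule sum_abs)
  also have "\<dots> \<le> (\<Sum>t<d. \<epsilon>\<^sup>2 + 2 * \<epsilon>)" by (intro sum_mono trm) auto
  also have "\<dots> = real (2 ^ D) * (\<epsilon>\<^sup>2 + 2 * \<epsilon>)" by (simp add: d_def)
  finally show ?thesis .
qed

end
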